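(* Let $n\ge 2$, fix $\boldsymbol{\rho}^0\in\mathcal{P}_n$ and $\alpha\in(0,\infty)$, and let $\mathbf{R}=(R_1,\dots,R_n)\sim\mathrm{Mallows}(\boldsymbol{\rho}^0,\alpha)$ with the footrule distance. For $i=1,\dots,n$ let $o^0_i$ be the item with $\rho^0_{o^0_i}=i$. Then for every $j\in\{1,\dots,n-1\}$, $$\mathbb{E}[R_{o^0_j}\mid \boldsymbol{\rho}^0,\alpha] < \mathbb{E}[R_{o^0_{j+1}}\mid \boldsymbol{\rho}^0,\alpha].$$
   Context: $\mathcal{P}_n$ denotes the set of permutations of $\{1,\dots,n\}$; a ranking $\mathbf{r}\in\mathcal{P}_n$ assigns rank $r_i$ to item $i$. The footrule distance is $d(\mathbf{r},\boldsymbol{\rho})=\sum_{i=1}^n|r_i-\rho_i|$. The Mallows distribution $\mathrm{Mallows}(\boldsymbol{\rho}^0,\alpha)$ on $\mathcal{P}_n$ has probability mass function $P(\mathbf{R}=\mathbf{r}\mid\boldsymbol{\rho}^0,\alpha)=\frac{1}{Z_n(\alpha)}\exp\{-\frac{\alpha}{n}d(\mathbf{r},\boldsymbol{\rho}^0)\}$, where $Z_n(\alpha)=\sum_{\mathbf{r}\in\mathcal{P}_n}\exp\{-\frac{\alpha}{n}d(\mathbf{r},\boldsymbol{\rho}^0)\}$ (which does not depend on $\boldsymbol{\rho}^0$). *)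

theory Defs
  imports "HOL-Combinatorics.Permutations" Complex_Main
begin

text \<open>Rankings of n items: permutations of {1..n}, represented as functions
  nat \<Rightarrow> nat permuting {1..n} (identity outside).  r i is the rank of item i.\<close>

definition rankings :: "nat \<Rightarrow> (nat \<Rightarrow> nat) set" where
  "rankings n = {r. r permutes {1..n}}"

definition footrule :: "nat \<Rightarrow> (nat \<Rightarrow> nat) \<Rightarrow> (nat \<Rightarrow> nat) \<Rightarrow> real" where
  "footrule n r \<rho> = (\<Sum>i=1..n. \<bar>real (r i) - real (\<rho> i)\<bar>)"

definition mallows_Z :: "nat \<Rightarrow> (nat \<Rightarrow> nat) \<Rightarrow> real \<Rightarrow> real" where
  "mallows_Z n \<rho>0 \<alpha> = (\<Sum>r\<in>rankings n. exp (- (\<alpha> / real n) * footrule n r \<rho>0))"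

definition mallows_pmf :: "nat \<Rightarrow> (nat \<Rightarrow> nat) \<Rightarrow> real \<Rightarrow> (nat \<Rightarrow> nat) \<Rightarrow> real" where
  "mallows_pmf n \<rho>0 \<alpha> r =
     exp (- (\<alpha> / real n) * footrule n r \<rho>0) / mallows_Z n \<rho>0 \<alpha>"

definition mallows_exp_rank :: "nat \<Rightarrow> (nat \<Rightarrow> nat) \<Rightarrow> real \<Rightarrow> nat \<Rightarrow> real" where
  "mallows_exp_rank n \<rho>0 \<alpha> i = (\<Sum>r\<in>rankings n. mallows_pmf n \<rho>0 \<alpha> r * real (r i))"

end

theory Submission
  imports Defs
begin

lemma footrule_swap:
  assumes ab: "a \<in> {1..n}" "b \<in> {1..n}" "a \<noteq> b"
  shows "footrule n (r \<circ> transpose a b) \<rho> - footrule n r \<rho> =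
    (\<bar>real (r b) - real (\<rho> a)\<bar> + \<bar>real (r a) - real (\<rho> b)\<bar>)
   - (\<bar>real (r a) - real (\<rho> a)\<bar> + \<bar>real (r b) - real (\<rho> b)\<bar>)"
proof -
  let ?f = "\<lambda>s i. \<bar>real (s i) - real (\<rho> i)\<bar>"
  have fin: "finite {1..n}" by simp
  have rem: "sum (?f s) {1..n} = ?f s a + ?f s b + sum (?f s) ({1..n} - {a} - {b})" for s
  proof -
    have "sum (?f s) {1..n} = ?f s a + sum (?f s) ({1..n} - {a})"
      using ab(1) fin by (intro sum.remove) auto
    also have "sum (?f s) ({1..n} - {a}) = ?f s b + sum (?f s) ({1..n} - {a} - {b})"
      using ab fin by (intro sum.remove) auto
    finally show ?thesis by simp
  qed
  have eq: "sum (?f (r \<circ> transpose a b)) ({1..n} - {a} - {b}) = sum (?f r) ({1..n} - {a} - {b})"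
    by (rule sum.cong) auto
  show ?thesis unfolding footrule_def rem eq by simp
qed

theorem lemma1:
  fixes n :: nat and \<rho>0 :: "nat \<Rightarrow> nat" and \<alpha> :: real and j :: nat
  assumes "n \<ge> 2"
    and "\<rho>0 \<in> rankings n"
    and "\<alpha> > 0"
    and "1 \<le> j" and "j \<le> n - 1"
  shows "mallows_exp_rank n \<rho>0 \<alpha> (inv \<rho>0 j) < mallows_exp_rank n \<rho>0 \<alpha> (inv \<rho>0 (j + 1))"
proof -
  define a where "a = inv \<rho>0 j"
  define b where "b = inv \<rho>0 (j+1)"
  have perm: "\<rho>0 permutes {1..n}" using assms(2) by (simp add: rankings_def)
  have ipm: "inv \<rho>0 permutes {1..n}" using permutes_inv[OF perm] .
  have ain: "a \<in> {1..n}" unfolding a_def using assms permutes_in_image[OF ipm] by auto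
  have bin: "b \<in> {1..n}" unfolding b_def using assms permutes_in_image[OF ipm] by auto
  have ra: "\<rho>0 a = j" unfolding a_def using permutes_inverses[OF perm] by simp
  have rb: "\<rho>0 b = j+1" unfolding b_def using permutes_inverses[OF perm] by simp
  have ab: "a \<noteq> b" using ra rb by auto
  define S where "S = rankings n"
  define p where "p = mallows_pmf n \<rho>0 \<alpha>"
  define \<sigma> where "\<sigma> = (\<lambda>r::nat\<Rightarrow>nat. r \<circ> transpose a b)"
  define A where "A = {r\<in>S. r a < r b}"
  define B where "B = {r\<in>S. r b < r a}"
  have finS: "finite S" unfolding S_def rankings_def by (rule finite_permutations) simp
  have Z: "mallows_Z n \<rho>0 \<alpha> > 0"
    unfolding mallows_Z_def
    by (rule sum_pos) (use finS perm in \<open>auto simp: S_def rankings_def\<close>)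
  have SAB: "S = A \<union> B"
  proof -
    have "r a \<noteq> r b" if "r \<in> S" for r
      using that ab permutes_inj[of r "{1..n}"] by (auto simp: S_def rankings_def inj_def)
    then show ?thesis unfolding A_def B_def using linorder_neqE_nat by blast
  qed
  have disj: "A \<inter> B = {}" unfolding A_def B_def by auto
  have \<sigma>S: "\<sigma> r \<in> S" if "r \<in> S" for r
    using that permutes_compose[OF permutes_swap_id[OF ain bin]]
    by (auto simp: S_def rankings_def \<sigma>_def)
  have \<sigma>\<sigma>: "\<sigma> (\<sigma> r) = r" for r by (auto simp: \<sigma>_def)
  have \<sigma>a: "\<sigma> r a = r b" and \<sigma>b: "\<sigma> r b = r a" for r by (auto simp: \<sigma>_def)
  have bij: "bij_betw \<sigma> A B"
    by (rule bij_betw_byWitness[where f' = \<sigma>])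
       (use \<sigma>S \<sigma>\<sigma> \<sigma>a \<sigma>b in \<open>auto simp: A_def B_def\<close>)
  let ?g = "\<lambda>r. p r * (real (r b) - real (r a))"
  have diff: "mallows_exp_rank n \<rho>0 \<alpha> b - mallows_exp_rank n \<rho>0 \<alpha> a = sum ?g S"
    unfolding mallows_exp_rank_def p_def S_def
    by (simp add: sum_subtractf[symmetric] algebra_simps)
  have "sum ?g S = sum ?g A + sum ?g B"
    unfolding SAB using finS SAB disj by (intro sum.union_disjoint) auto
  also have "sum ?g B = sum (\<lambda>r. ?g (\<sigma> r)) A"
    using sum.reindex_bij_betw[OF bij, of ?g] by simp
  also have "sum ?g A + sum (\<lambda>r. ?g (\<sigma> r)) A
      = sum (\<lambda>r. (p r - p (\<sigma> r)) * (real (r b) - real (r a))) A"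
    by (simp add: \<sigma>a \<sigma>b sum.distrib[symmetric] algebra_simps)
  finally have eqA: "sum ?g S = sum (\<lambda>r. (p r - p (\<sigma> r)) * (real (r b) - real (r a))) A" .
  have key: "footrule n (\<sigma> r) \<rho>0 - footrule n r \<rho>0 \<ge> 0" if "r \<in> A" for r
  proof -
    have "r a < r b" using that by (simp add: A_def)
    then show ?thesis unfolding \<sigma>_def footrule_swap[OF ain bin ab] ra rb by auto
  qed
  have mono: "p (\<sigma> r) \<le> p r" if "r \<in> A" for r
    using key[OF that] Z assms(3)
    by (auto simp: p_def mallows_pmf_def divide_right_mono mult_left_mono)
  have "\<rho>0 \<in> A" using ra rb assms(2) by (simp add: A_def S_def)
  moreover have "p (\<sigma> \<rho>0) < p \<rho>0"
  proof -
    have "footrule n (\<sigma> \<rho>0) \<rho>0 - footrule n \<rho>0 \<rho>0 = 2"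
      unfolding \<sigma>_def footrule_swap[OF ain bin ab] ra rb by simp
    then show ?thesis using Z assms(1,3)
      by (auto simp: p_def mallows_pmf_def divide_strict_right_mono)
  qed
  ultimately have "sum (\<lambda>r. (p r - p (\<sigma> r)) * (real (r b) - real (r a))) A > 0"
    using finS mono ra rb
    by (intro sum_pos2[of A \<rho>0]) (auto simp: A_def)
  then show ?thesis using diff eqA a_def b_def by simp
qed

end
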